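(* Let $T$ be a reduced linear trellis of length $n$ over $\mathbb{F}$, let $\{\mathfrak{s}_i\}_{i\in\mathcal{I}}$ be a family of spans, and let $\mathfrak{s}$ be a span such that $\mathfrak{s}\not\le\mathfrak{s}_i$ for every $i\in\mathcal{I}$. Then $$\mathbb{S}_{\mathfrak{s}}(T)\cap\sum_{i\in\mathcal{I}}\mathbb{S}_{\mathfrak{s}_i}(T)\ \subseteq\ \mathbb{S}_{<\mathfrak{s}}(T).$$
   Context: Let $\mathbb{F}$ be a finite field with $q$ elements and $n\ge1$; indices are taken in $\mathbb{Z}_n$. A trellis $T$ of length $n$ over $\mathbb{F}$ consists of pairwise disjoint finite vertex sets $V_i(T)$, $i\in\mathbb{Z}_n$, and edge sets $E_i(T)\subseteq V_i(T)\times\mathbb{F}\times V_{i+1}(T)$; $(v,\alpha,w)\in E_i(T)$ is an edge from $v$ to $w$ with label $\alpha$ at time index $i$. Every trellis is assumed trim: each vertex has at least one outgoing and one incoming edge. $T$ is linear if every $V_i(T)$ is an $\mathbb{F}$-vector space and every $E_i(T)$ is a subspace of $V_i(T)\times\mathbb{F}\times V_{i+1}(T)$. A path of length $m$ is a sequence $v_0\alpha_0v_1\alpha_1\cdots\alpha_{m-1}v_m$ such that each $(v_j,\alpha_j,v_{j+1})$ is an edge. A cycle is a path of length $n$ starting in $V_0(T)$ with $v_n=v_0$; it is identified with $(\mathbf{v},\boldsymbol{\alpha})\in\prod_{i\in\mathbb{Z}_n}V_i(T)\times\mathbb{F}^n$. The label code $\mathbb{S}(T)$ is the set of cycles (a linear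 subspace if $T$ is linear); $L(\mathbf{v},\boldsymbol{\alpha}):=\boldsymbol{\alpha}$; $C(T):=L(\mathbb{S}(T))$. $T$ is reduced if every edge lies on some cycle. Spans. For $a\in\mathbb{Z}_n$ and $0\le l\le n-1$ put $[a,a+l]=\{a,a+1,\dots,a+l\}\subseteq\mathbb{Z}_n$ and $(a,a+l]=[a,a+l]\setminus\{a\}$. Such a pair $(a,l)$ is a span of length $l$; there are also two degenerate spans, $\emptyset$ (length $-1$, also written $(a,-1)$) and $\mathbb{Z}_n$ (length $n$, also written $(a,n)$). Partial order: $(a_1,l_1)\le(a_2,l_2)$ iff ($l_1\le l_2<n-1$ and $[a_1,a_1+l_1]\subseteq[a_2,a_2+l_2]$) or ($l_2=n-1$ and $(a_1,a_1+l_1]\subseteq(a_2,a_2+l_2]$) or $l_1=-1$ or $l_2=n$. For a linear trellis $T$, a nondegenerate span $(a,l)$ is a span of the cycle $(\mathbf{v},\boldsymbol{\alpha})$ if $\{i:v_i\neq0\}\subseteq(a,a+l]$ and $\{i:\alpha_i\ne0\}\subseteq[a,a+l]$; $\emptyset$ is a span only of the zero cycle and $\mathbb{Z}_n$ is a span of every cycle. The span subcode $\mathbb{S}_{\mathfrak{s}}(T)$ is the subspace of cycles having span $\mathfrak{s}$, and $\mathbb{S}_{<\mathfrak{s}}(T):=\sum_{\mathfrak{s}'\lneq\mathfrak{s}}\mathbb{S}_{\mathfrak{s}'}(T)$. *)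

theory Defs
  imports Complex_Main
begin

(* Time indices Z_n are represented by naturals i < n; successor is Suc i mod n. *)

definition linear_trellis ::
  "nat \<Rightarrow> ('f::field \<Rightarrow> 'v::ab_group_add \<Rightarrow> 'v) \<Rightarrow> (nat \<Rightarrow> 'v set)
     \<Rightarrow> (nat \<Rightarrow> ('v \<times> 'f \<times> 'v) set) \<Rightarrow> bool" where
  "linear_trellis n scale V E \<longleftrightarrow>
     n \<ge> 1 \<and> vector_space scale \<and>
     (\<forall>i<n. finite (V i) \<and> 0 \<in> V i \<and>
        (\<forall>x\<in>V i. \<forall>y\<in>V i. x + y \<in> V i) \<and> (\<forall>c. \<forall>x\<in>V i. scale c x \<in> V i)) \<and>
     (\<forall>i<n. E i \<subseteq> V i \<times> UNIV \<times> V (Suc i mod n)) \<and>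
     (\<forall>i<n. (0, 0, 0) \<in> E i \<and>
        (\<forall>v a w v' a' w'. (v, a, w) \<in> E i \<longrightarrow> (v', a', w') \<in> E i \<longrightarrow>
             (v + v', a + a', w + w') \<in> E i) \<and>
        (\<forall>c v a w. (v, a, w) \<in> E i \<longrightarrow> (scale c v, c * a, scale c w) \<in> E i)) \<and>
     \<comment> \<open>trim: every vertex has an outgoing and an incoming edge\<close>
     (\<forall>i<n. \<forall>v\<in>V i. \<exists>a w. (v, a, w) \<in> E i) \<and>
     (\<forall>i<n. \<forall>w\<in>V (Suc i mod n). \<exists>v a. (v, a, w) \<in> E i)"

type_synonym ('v, 'f) cycle = "(nat \<Rightarrow> 'v) \<times> (nat \<Rightarrow> 'f)"

(* Cycles, identified with elements of prod_i V_i \<times> F^n (entries outside {0..<n} are 0). *)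
definition cycles :: "nat \<Rightarrow> (nat \<Rightarrow> ('v::zero \<times> 'f::zero \<times> 'v) set) \<Rightarrow> ('v, 'f) cycle set" where
  "cycles n E = {(v, a). (\<forall>i<n. (v i, a i, v (Suc i mod n)) \<in> E i) \<and>
                          (\<forall>i\<ge>n. v i = 0 \<and> a i = 0)}"

definition reduced :: "nat \<Rightarrow> (nat \<Rightarrow> ('v::zero \<times> 'f::zero \<times> 'v) set) \<Rightarrow> bool" where
  "reduced n E \<longleftrightarrow> (\<forall>i<n. \<forall>e\<in>E i. \<exists>(v, a)\<in>cycles n E. e = (v i, a i, v (Suc i mod n)))"

(* Spans: Empty (length -1), Full = Z_n (length n), Sp a l for a \<in> Z_n, 0 \<le> l \<le> n-1. *)
datatype span = Empty | Full | Sp nat nat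

definition valid_span :: "nat \<Rightarrow> span \<Rightarrow> bool" where
  "valid_span n s = (case s of Sp a l \<Rightarrow> a < n \<and> l < n | _ \<Rightarrow> True)"

definition closed_int :: "nat \<Rightarrow> nat \<Rightarrow> nat \<Rightarrow> nat set" where
  "closed_int n a l = {(a + j) mod n | j. j \<le> l}"

definition halfopen_int :: "nat \<Rightarrow> nat \<Rightarrow> nat \<Rightarrow> nat set" where
  "halfopen_int n a l = closed_int n a l - {a}"

fun span_le :: "nat \<Rightarrow> span \<Rightarrow> span \<Rightarrow> bool" where
  "span_le n Empty _ = True"
| "span_le n _ Full = True"
| "span_le n Full _ = False"
| "span_le n (Sp a l) Empty = False"
| "span_le n (Sp a1 l1) (Sp a2 l2) =
     ((l1 \<le> l2 \<and> l2 < n - 1 \<and> closed_int n a1 l1 \<subseteq> closed_int n a2 l2) \<or>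
      (l2 = n - 1 \<and> halfopen_int n a1 l1 \<subseteq> halfopen_int n a2 l2))"

fun is_span_of :: "nat \<Rightarrow> span \<Rightarrow> ('v::zero, 'f::zero) cycle \<Rightarrow> bool" where
  "is_span_of n Empty (v, a) = ((\<forall>i. v i = 0) \<and> (\<forall>i. a i = 0))"
| "is_span_of n Full c = True"
| "is_span_of n (Sp s l) (v, a) =
     ({i. i < n \<and> v i \<noteq> 0} \<subseteq> halfopen_int n s l \<and> {i. i < n \<and> a i \<noteq> 0} \<subseteq> closed_int n s l)"

definition span_subcode :: "nat \<Rightarrow> (nat \<Rightarrow> ('v::zero \<times> 'f::zero \<times> 'v) set) \<Rightarrow> span \<Rightarrow> ('v, 'f) cycle set" where
  "span_subcode n E s = {c \<in> cycles n E. is_span_of n s c}"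

inductive_set subspace_sum :: "('f::field \<Rightarrow> 'v::ab_group_add \<Rightarrow> 'v) \<Rightarrow> ('v, 'f) cycle set set \<Rightarrow> ('v, 'f) cycle set"
  for scale :: "'f::field \<Rightarrow> 'v::ab_group_add \<Rightarrow> 'v" and A :: "('v, 'f) cycle set set" where
  zero: "(\<lambda>_. 0, \<lambda>_. 0) \<in> subspace_sum scale A"
| mem: "X \<in> A \<Longrightarrow> x \<in> X \<Longrightarrow> x \<in> subspace_sum scale A"
| add: "(v, a) \<in> subspace_sum scale A \<Longrightarrow> (w, b) \<in> subspace_sum scale A \<Longrightarrow>
        (\<lambda>i. v i + w i, \<lambda>i. a i + b i) \<in> subspace_sum scale A"
| smul: "(v, a) \<in> subspace_sum scale A \<Longrightarrow>
        (\<lambda>i. scale c (v i), \<lambda>i. c * a i) \<in> subspace_sum scale A"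

definition span_subcode_less ::
  "nat \<Rightarrow> ('f::field \<Rightarrow> 'v::ab_group_add \<Rightarrow> 'v) \<Rightarrow> (nat \<Rightarrow> ('v \<times> 'f \<times> 'v) set) \<Rightarrow> span \<Rightarrow> ('v, 'f) cycle set" where
  "span_subcode_less n scale E s =
     subspace_sum scale {span_subcode n E s' | s'. valid_span n s' \<and> span_le n s' s \<and> s' \<noteq> s}"

end

theory Submission
  imports Defs
begin

lemma lt_E_zero: "linear_trellis n scale V E \<Longrightarrow> i < n \<Longrightarrow> (0,0,0) \<in> E i"
  unfolding linear_trellis_def by simp
lemma lt_E_add: "linear_trellis n scale V E \<Longrightarrow> i < n \<Longrightarrow> (v,a,w) \<in> E i \<Longrightarrow> (v',a',w') \<in> E i
  \<Longrightarrow> (v+v',a+a',w+w') \<in> E i"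
  unfolding linear_trellis_def by simp
lemma lt_E_smul: "linear_trellis n scale V E \<Longrightarrow> i < n \<Longrightarrow> (v,a,w) \<in> E i
  \<Longrightarrow> (scale c v, c*a, scale c w) \<in> E i"
  unfolding linear_trellis_def by simp
lemma lt_vs: "linear_trellis n scale V E \<Longrightarrow> module scale"
  unfolding linear_trellis_def module_iff_vector_space by simp
lemma lt_E_diff: assumes "linear_trellis n scale V E" "i < n" "(v,a,w) \<in> E i" "(v',a',w') \<in> E i"
  shows "(v-v',a-a',w-w') \<in> E i"
proof -
  have vs: "module scale" using lt_vs[OF assms(1)] .
  have "(scale (-1) v', (-1)*a', scale (-1) w') \<in> E i" using lt_E_smul assms by blast
  hence "(- v', - a', - w') \<in> E i" using module.scale_minus_left[OF vs] module.scale_one[OF vs] by simp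
  from lt_E_add[OF assms(1,2,3) this] show ?thesis by simp
qed
lemma suc_mod_cancel: assumes "Suc x mod (n::nat) = Suc y mod n" shows "x mod n = y mod n"
proof (cases "n = 0")
  case True then show ?thesis using assms by simp
next
  case False
  have "\<And>z. z mod n = (Suc z mod n + (n-1)) mod n"
  proof -
    fix z
    have "Suc z + (n-1) = z + n" using False by simp
    then have "z mod n = (Suc z + (n-1)) mod n" by simp
    also have "\<dots> = (Suc z mod n + (n-1)) mod n" by (simp add: mod_add_left_eq)
    finally show "z mod n = (Suc z mod n + (n-1)) mod n" .
  qed
  then show ?thesis using assms by metis
qed
lemma off1: assumes "(n::nat) > 0" "a < n" "j < n" shows "((a+j) mod n + n - a) mod n = j"
proof (cases "a + j < n")
  case True
  then have "(a+j) mod n = a + j" by simp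
  then have "(a+j) mod n + n - a = j + n" by linarith
  then show ?thesis using assms by simp
next
  case False
  then have "a + j = (a + j - n) + n" by linarith
  then have "(a+j) mod n = (a + j - n) mod n" by (metis mod_add_self2)
  also have "\<dots> = a + j - n" using assms False by simp
  finally have "(a+j) mod n + n - a = j" using False by linarith
  then show ?thesis using assms by simp
qed
lemma off2: assumes "(n::nat) > 0" "a < n" "i < n" shows "(a + (i + n - a) mod n) mod n = i"
proof (cases "a \<le> i")
  case True
  then have "i + n - a = (i - a) + n" using assms by linarith
  then have "(i + n - a) mod n = (i - a) mod n" by simp
  also have "\<dots> = i - a" using assms by simp
  finally have "(a + (i + n - a) mod n) = i" using True by linarith
  then show ?thesis using assms by simp
next
  case False
  then have "(i + n - a) mod n = i + n - a" using assms by simp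
  then have "a + (i + n - a) mod n = i + n" using False assms by linarith
  then show ?thesis using assms by simp
qed

lemma closed_img: "closed_int n a l = (\<lambda>j. (a+j) mod n) ` {..l}"
  by (auto simp: closed_int_def)

lemma finite_closed: "finite (closed_int n a l)" unfolding closed_img by simp

lemma closed_card: assumes "(n::nat) > 0" "a < n" "l < n" shows "card (closed_int n a l) = Suc l"
proof -
  have "inj_on (\<lambda>j. (a+j) mod n) {..l}"
  proof (rule inj_onI)
    fix x y assume "x \<in> {..l}" "y \<in> {..l}" "(a+x) mod n = (a+y) mod n"
    then have xy: "x < n" "y < n" "(a+x) mod n = (a+y) mod n" using assms(3) by auto
    have "x = ((a+x) mod n + n - a) mod n" using off1[OF assms(1,2) xy(1)] by simp
    also have "\<dots> = ((a+y) mod n + n - a) mod n" using xy(3) by simp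
    also have "\<dots> = y" using off1[OF assms(1,2) xy(2)] by simp
    finally show "x = y" .
  qed
  then show ?thesis unfolding closed_img by (simp add: card_image)
qed

lemma a_in_closed: "a < n \<Longrightarrow> a \<in> closed_int n a l"
  unfolding closed_int_def by (rule CollectI, rule exI[of _ 0]) simp

lemma halfopen_card: assumes "(n::nat) > 0" "a < n" "l < n" shows "card (halfopen_int n a l) = l"
proof -
  have "card (halfopen_int n a l) = card (closed_int n a l) - 1"
    unfolding halfopen_int_def by (rule card_Diff_singleton[OF a_in_closed[OF assms(2)]])
  then show ?thesis using closed_card[OF assms] by simp
qed

lemma finite_halfopen: "finite (halfopen_int n a l)" unfolding halfopen_int_def using finite_closed by simp

lemma closed_zero: "a < n \<Longrightarrow> closed_int n a 0 = {a}" unfolding closed_int_def by auto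
lemma halfopen_zero: "a < n \<Longrightarrow> halfopen_int n a 0 = {}" unfolding halfopen_int_def using closed_zero by auto

lemma zero_exists:
  assumes n: "(n::nat) > 0" and a: "a < n" and l: "l < n" "1 \<le> l"
    and y: "y \<in> span_subcode n E sk" and vs: "valid_span n sk" and nle: "\<not> span_le n (Sp a l) sk"
  shows "\<exists>p. 1 \<le> p \<and> p \<le> l \<and> fst y ((a+p) mod n) = 0"
proof (rule ccontr)
  assume "\<not> ?thesis"
  hence nz: "\<And>p. 1 \<le> p \<Longrightarrow> p \<le> l \<Longrightarrow> fst y ((a+p) mod n) \<noteq> 0" by auto
  obtain v \<alpha> where yv: "y = (v, \<alpha>)" by (cases y)
  show False
  proof (cases sk)
    case Empty
    then have "v ((a+1) mod n) = 0" using y yv by (simp add: span_subcode_def)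
    then show False using nz[of 1] l yv by simp
  next
    case Full
    then show False using nle by simp
  next
    case (Sp b m)
    have bm: "b < n" "m < n" using vs Sp by (auto simp: valid_span_def)
    have sp: "{i. i<n \<and> v i \<noteq> 0} \<subseteq> halfopen_int n b m" using y yv Sp by (simp add: span_subcode_def)
    have H: "halfopen_int n a l \<subseteq> halfopen_int n b m"
    proof
      fix i assume "i \<in> halfopen_int n a l"
      then obtain j where j: "j \<le> l" "i = (a+j) mod n" "i \<noteq> a" by (auto simp: halfopen_int_def closed_int_def)
      have "j \<noteq> 0"
      proof
        assume "j = 0" hence "(a+j) mod n = a" using a by simp
        thus False using j by simp
      qed
      hence "v i \<noteq> 0" using nz[of j] j yv by simp
      moreover have "i < n" using j n by simp
      ultimately show "i \<in> halfopen_int n b m" using sp by blast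
    qed
    show False
    proof (cases "m = n - 1")
      case True
      then have "span_le n (Sp a l) (Sp b m)" using H by simp
      then show False using nle Sp by metis
    next
      case False
      hence mlt: "m < n - 1" using bm by simp
      have "l \<le> m" proof -
        have "card (halfopen_int n a l) \<le> card (halfopen_int n b m)" by (rule card_mono[OF finite_halfopen H])
        then show ?thesis unfolding halfopen_card[OF n a l(1)] halfopen_card[OF n bm] .
      qed
      have n2: "1 < n" using l by simp
      have "(a+1) mod n \<in> halfopen_int n a l"
        unfolding halfopen_int_def closed_int_def using l off1[OF n a, of 1] n2 by force
      hence "(a+1) mod n \<in> halfopen_int n b m" using H by blast
      then obtain k where k: "k \<le> m" "(a+1) mod n = (b+k) mod n" "(b+k) mod n \<noteq> b"
        by (auto simp: halfopen_int_def closed_int_def)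
      have "k \<noteq> 0"
      proof
        assume "k = 0" hence "(b+k) mod n = b" using bm by simp
        thus False using k by simp
      qed
      hence "Suc a mod n = Suc (b + (k-1)) mod n" using k by simp
      hence "a mod n = (b + (k-1)) mod n" by (rule suc_mod_cancel)
      hence "a = (b + (k-1)) mod n" using a by simp
      moreover have "k - 1 \<le> m" using k by simp
      ultimately have ain: "a \<in> closed_int n b m" unfolding closed_int_def by blast
      have "closed_int n a l \<subseteq> closed_int n b m"
      proof
        fix x assume "x \<in> closed_int n a l"
        then show "x \<in> closed_int n b m"
          using ain H unfolding halfopen_int_def by blast
      qed
      hence "span_le n (Sp a l) (Sp b m)" using \<open>l \<le> m\<close> mlt by simp
      then show False using nle Sp by metis
    qed
  qed
qed


definition inv_c :: "nat \<Rightarrow> (nat \<Rightarrow> ('v::zero \<times> 'f::zero \<times> 'v) set) \<Rightarrow> nat \<Rightarrow> nat \<Rightarrow> ('v, 'f) cycle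
   \<Rightarrow> (nat \<Rightarrow> 'v) \<Rightarrow> (nat \<Rightarrow> 'f) \<Rightarrow> bool" where
  "inv_c n E a l y cs cl \<longleftrightarrow> (\<forall>t<l. (cs t, cl t, cs (Suc t)) \<in> E ((a+t) mod n)) \<and>
     cs 0 = fst y a \<and> cs 1 = fst y ((a+1) mod n) \<and> cl 0 = snd y a \<and> cs l = 0 \<and> cl l = 0"

lemma cycle_edge: "(v, al) \<in> cycles n E \<Longrightarrow> i < n \<Longrightarrow> (v i, al i, v (Suc i mod n)) \<in> E i"
  unfolding cycles_def by simp

lemma cycle_out: "(v, al) \<in> cycles n E \<Longrightarrow> i \<ge> n \<Longrightarrow> v i = 0 \<and> al i = 0"
  unfolding cycles_def by simp

lemma inv_mem:
  assumes lt: "linear_trellis n scale V E" and n: "n > 0" and a: "a < n" and l: "l < n" "1 \<le> l"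
    and y: "y \<in> span_subcode n E sk" and vs: "valid_span n sk" and nle: "\<not> span_le n (Sp a l) sk"
  shows "\<exists>cs cl. inv_c n E a l y cs cl"
proof -
  obtain p where p: "1 \<le> p" "p \<le> l" "fst y ((a+p) mod n) = 0"
    using zero_exists[OF n a l y vs nle] by blast
  obtain v al where yv: "y = (v, al)" by (cases y)
  have cyc: "(v, al) \<in> cycles n E" using y yv by (simp add: span_subcode_def)
  define cs where "cs t = (if t \<le> p then v ((a+t) mod n) else 0)" for t
  define cl where "cl t = (if t < p then al ((a+t) mod n) else 0)" for t
  have edges: "(cs t, cl t, cs (Suc t)) \<in> E ((a+t) mod n)" if "t < l" for t
  proof -
    have i: "(a+t) mod n < n" using n by simp
    consider "Suc t \<le> p" | "t = p" | "t > p" by linarith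
    then show ?thesis
    proof cases
      case 1
      have "Suc ((a+t) mod n) mod n = (a + Suc t) mod n" by (simp add: mod_Suc_eq)
      then have "(v ((a+t) mod n), al ((a+t) mod n), v ((a + Suc t) mod n)) \<in> E ((a+t) mod n)"
        using cycle_edge[OF cyc i] by simp
      then show ?thesis using 1 unfolding cs_def cl_def by simp
    next
      case 2
      then have "cs t = 0" "cl t = 0" "cs (Suc t) = 0" using p yv unfolding cs_def cl_def by auto
      then show ?thesis using lt_E_zero[OF lt i] by simp
    next
      case 3
      then have "cs t = 0" "cl t = 0" "cs (Suc t) = 0" unfolding cs_def cl_def by auto
      then show ?thesis using lt_E_zero[OF lt i] by simp
    qed
  qed
  have c0: "cs 0 = fst y a" unfolding cs_def using yv a by simp
  have c1: "cs 1 = fst y ((a+1) mod n)" unfolding cs_def using yv p by simp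
  have c2: "cl 0 = snd y a" unfolding cl_def using yv a p by simp
  have c3: "cs l = 0"
  proof (cases "l = p")
    case True then show ?thesis unfolding cs_def using p yv by simp
  next
    case False then show ?thesis unfolding cs_def using p by simp
  qed
  have c4: "cl l = 0" unfolding cl_def using p by simp
  show ?thesis unfolding inv_c_def using edges c0 c1 c2 c3 c4 by blast
qed

lemma inv_sum:
  assumes lt: "linear_trellis n scale V E" and n: "n > 0"
    and mem: "\<And>X y. X \<in> A \<Longrightarrow> y \<in> X \<Longrightarrow> \<exists>cs cl. inv_c n E a l y cs cl"
    and y: "y \<in> subspace_sum scale A"
  shows "\<exists>cs cl. inv_c n E a l y cs cl"
  using y
proof (induction rule: subspace_sum.induct)
  case zero
  have "inv_c n E a l (\<lambda>_. 0, \<lambda>_. 0) (\<lambda>_. 0) (\<lambda>_. 0)"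
    unfolding inv_c_def using lt_E_zero[OF lt] n by simp
  then show ?case by blast
next
  case (mem X x)
  then show ?case using assms(3) by blast
next
  case (add v al w b)
  from add.IH obtain cs1 cl1 cs2 cl2 where i1: "inv_c n E a l (v, al) cs1 cl1" and i2: "inv_c n E a l (w, b) cs2 cl2"
    by blast
  have "inv_c n E a l (\<lambda>i. v i + w i, \<lambda>i. al i + b i) (\<lambda>t. cs1 t + cs2 t) (\<lambda>t. cl1 t + cl2 t)"
    unfolding inv_c_def
  proof (intro conjI allI impI)
    fix t assume "t < l"
    then have "(cs1 t, cl1 t, cs1 (Suc t)) \<in> E ((a+t) mod n)" "(cs2 t, cl2 t, cs2 (Suc t)) \<in> E ((a+t) mod n)"
      using i1 i2 unfolding inv_c_def by auto
    then show "(cs1 t + cs2 t, cl1 t + cl2 t, cs1 (Suc t) + cs2 (Suc t)) \<in> E ((a + t) mod n)"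
      using lt_E_add[OF lt] n by simp
  qed (use i1 i2 in \<open>simp_all add: inv_c_def\<close>)
  then show ?case by blast
next
  case (smul v al c)
  from smul.IH obtain cs1 cl1 where i1: "inv_c n E a l (v, al) cs1 cl1" by blast
  have md: "module scale" using lt_vs[OF lt] .
  have "inv_c n E a l (\<lambda>i. scale c (v i), \<lambda>i. c * al i) (\<lambda>t. scale c (cs1 t)) (\<lambda>t. c * cl1 t)"
    unfolding inv_c_def
  proof (intro conjI allI impI)
    fix t assume "t < l"
    then have "(cs1 t, cl1 t, cs1 (Suc t)) \<in> E ((a+t) mod n)"
      using i1 unfolding inv_c_def by auto
    then show "(scale c (cs1 t), c * cl1 t, scale c (cs1 (Suc t))) \<in> E ((a + t) mod n)"
      using lt_E_smul[OF lt] n by simp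
  qed (use i1 module.scale_zero_right[OF md] in \<open>simp_all add: inv_c_def\<close>)
  then show ?case by blast
qed

lemma lab_sum:
  assumes mem: "\<And>X y. X \<in> A \<Longrightarrow> y \<in> X \<Longrightarrow> snd y a = 0"
    and y: "y \<in> subspace_sum scale A"
  shows "snd y a = 0"
  using y
proof (induction rule: subspace_sum.induct)
  case zero then show ?case by simp
next
  case (mem X x) then show ?case using assms(1) by blast
next
  case (add v al w b) then show ?case by simp
next
  case (smul v al c) then show ?case by simp
qed

lemma sum_mono: assumes AB: "A \<subseteq> B" and y: "y \<in> subspace_sum scale A" shows "y \<in> subspace_sum scale B"
  using y
proof (induction rule: subspace_sum.induct)
  case zero then show ?case by (rule subspace_sum.zero)
next
  case (mem X x) then show ?case using AB by (blast intro: subspace_sum.mem)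
next
  case (add v al w b) then show ?case by (blast intro: subspace_sum.add)
next
  case (smul v al c) then show ?case by (blast intro: subspace_sum.smul)
qed


lemma splice:
  assumes lt: "linear_trellis n scale V E" and n: "n > 0" and a: "a < n" and l: "l < n"
    and e: "\<And>t. t < l \<Longrightarrow> (cs t, cl t, cs (Suc t)) \<in> E ((a+t) mod n)"
    and z: "cs 0 = 0" "cs l = 0" "cl l = 0"
  shows "(\<lambda>i. if i < n \<and> (i+n-a) mod n \<le> l then cs ((i+n-a) mod n) else 0,
          \<lambda>i. if i < n \<and> (i+n-a) mod n \<le> l then cl ((i+n-a) mod n) else 0) \<in> cycles n E"
    (is "(?cv, ?ca) \<in> _")
proof -
  have edge: "(?cv i, ?ca i, ?cv (Suc i mod n)) \<in> E i" if i: "i < n" for i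
  proof -
    define t where "t = (i+n-a) mod n"
    have tn: "t < n" unfolding t_def using n by simp
    have it: "i = (a+t) mod n" unfolding t_def using off2[OF n a i] by simp
    have si: "Suc i mod n = (a + Suc t) mod n" using it by (simp add: mod_Suc_eq)
    have sin: "Suc i mod n < n" using n by simp
    have cvi: "?cv i = (if t \<le> l then cs t else 0)" "?ca i = (if t \<le> l then cl t else 0)"
      using i unfolding t_def by auto
    show ?thesis
    proof (cases "t < l")
      case True
      have "Suc t < n" using True l by simp
      then have os: "(Suc i mod n + n - a) mod n = Suc t" unfolding si by (rule off1[OF n a])
      have "?cv (Suc i mod n) = cs (Suc t)" using os sin True by simp
      moreover have "?cv i = cs t" "?ca i = cl t" using cvi True by auto
      ultimately show ?thesis using e[OF True] it by simp
    next
      case False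
      have c1: "?cv i = 0" "?ca i = 0" using cvi False z by auto
      have c2: "?cv (Suc i mod n) = 0"
      proof (cases "Suc t < n")
        case True
        then have os: "(Suc i mod n + n - a) mod n = Suc t" unfolding si by (rule off1[OF n a])
        then show ?thesis using False by simp
      next
        case False
        then have "Suc t = n" using tn by simp
        then have "Suc i mod n = a" using si a by simp
        then have os: "(Suc i mod n + n - a) mod n = 0" by simp
        then show ?thesis using z by simp
      qed
      show ?thesis using c1 c2 lt_E_zero[OF lt i] by simp
    qed
  qed
  show ?thesis unfolding cycles_def using edge by auto
qed

lemma cycles_diff:
  assumes lt: "linear_trellis n scale V E" and "(v, al) \<in> cycles n E" "(w, b) \<in> cycles n E"
  shows "(\<lambda>i. v i - w i, \<lambda>i. al i - b i) \<in> cycles n E"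
proof -
  have "(v i - w i, al i - b i, v (Suc i mod n) - w (Suc i mod n)) \<in> E i" if "i < n" for i
    using lt_E_diff[OF lt that cycle_edge[OF assms(2) that] cycle_edge[OF assms(3) that]] .
  moreover have "v i - w i = 0 \<and> al i - b i = 0" if "i \<ge> n" for i
    using cycle_out[OF assms(2) that] cycle_out[OF assms(3) that] by simp
  ultimately show ?thesis unfolding cycles_def by simp
qed


lemma closed_shift: "((a+1) mod n + j) mod n = (a + Suc j) mod (n::nat)"
  by (simp add: mod_add_left_eq)

lemma closed_mono_len: "l1 \<le> l2 \<Longrightarrow> closed_int n a l1 \<subseteq> closed_int n a l2"
  unfolding closed_int_def by fastforce

lemma closed_shift_sub: assumes "1 \<le> l" shows "closed_int n ((a+1) mod n) (l-1) \<subseteq> closed_int n a l"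
proof
  fix x assume "x \<in> closed_int n ((a+1) mod n) (l-1)"
  then obtain j where j: "j \<le> l - 1" "x = ((a+1) mod n + j) mod n" unfolding closed_int_def by blast
  then have "x = (a + Suc j) mod n" using closed_shift by simp
  moreover have "Suc j \<le> l" using j assms by simp
  ultimately show "x \<in> closed_int n a l" unfolding closed_int_def by blast
qed

lemma halfopen_shift_sub: assumes n: "(n::nat) > 0" and a: "a < n" and l: "l < n" "1 \<le> l"
  shows "halfopen_int n ((a+1) mod n) (l-1) \<subseteq> halfopen_int n a l"
proof
  fix x assume "x \<in> halfopen_int n ((a+1) mod n) (l-1)"
  then obtain j where j: "j \<le> l - 1" "x = ((a+1) mod n + j) mod n" unfolding halfopen_int_def closed_int_def by blast
  then have xe: "x = (a + Suc j) mod n" using closed_shift by simp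
  moreover have sj: "Suc j \<le> l" using j l by simp
  ultimately have "x \<in> closed_int n a l" unfolding closed_int_def by blast
  moreover have "x \<noteq> a"
  proof
    assume "x = a"
    then have "((a + Suc j) mod n + n - a) mod n = (a + n - a) mod n" using xe by simp
    then have "Suc j = 0" using off1[OF n a, of "Suc j"] sj l by simp
    then show False by simp
  qed
  ultimately show "x \<in> halfopen_int n a l" unfolding halfopen_int_def by blast
qed

lemma off_closed: assumes n: "(n::nat) > 0" and a: "a < n" and l: "l < n" and i: "i \<in> closed_int n a l"
  shows "(i+n-a) mod n \<le> l"
proof -
  obtain j where j: "j \<le> l" "i = (a+j) mod n" using i unfolding closed_int_def by blast
  then have "(i+n-a) mod n = j" using off1[OF n a, of j] l by simp
  then show ?thesis using j by simp
qed


theorem mainTheorem1: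
  fixes scale :: "'f::{field,finite} \<Rightarrow> 'v::ab_group_add \<Rightarrow> 'v"
    and n :: nat and V :: "nat \<Rightarrow> 'v set" and E :: "nat \<Rightarrow> ('v \<times> 'f \<times> 'v) set"
    and I :: "'i set" and ss :: "'i \<Rightarrow> span" and s :: span
  assumes "linear_trellis n scale V E"
    and "reduced n E"
    and "\<forall>i\<in>I. valid_span n (ss i)"
    and "valid_span n s"
    and "\<forall>i\<in>I. \<not> span_le n s (ss i)"
  shows "span_subcode n E s \<inter> subspace_sum scale ((\<lambda>i. span_subcode n E (ss i)) ` I)
           \<subseteq> span_subcode_less n scale E s"
proof
  fix x assume xin: "x \<in> span_subcode n E s \<inter> subspace_sum scale ((\<lambda>i. span_subcode n E (ss i)) ` I)"
  have lt: "linear_trellis n scale V E" using assms(1) .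
  have n: "n > 0" using lt unfolding linear_trellis_def by simp
  obtain v al where xv: "x = (v, al)" by (cases x)
  have xc: "(v, al) \<in> cycles n E" using xin xv by (simp add: span_subcode_def)
  have xs: "is_span_of n s (v, al)" using xin xv by (simp add: span_subcode_def)
  have xsum: "x \<in> subspace_sum scale ((\<lambda>i. span_subcode n E (ss i)) ` I)" using xin by blast
  let ?F = "{span_subcode n E s' | s'. valid_span n s' \<and> span_le n s' s \<and> s' \<noteq> s}"
  show "x \<in> span_subcode_less n scale E s"
  proof (cases s)
    case Empty
    then have "v = (\<lambda>_. 0)" "al = (\<lambda>_. 0)" using xs by auto
    then show ?thesis unfolding span_subcode_less_def using xv subspace_sum.zero by simp
  next
    case Full
    have "(\<lambda>i. span_subcode n E (ss i)) ` I \<subseteq> ?F"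
    proof
      fix X assume "X \<in> (\<lambda>i. span_subcode n E (ss i)) ` I"
      then obtain i where i: "i \<in> I" "X = span_subcode n E (ss i)" by blast
      have "valid_span n (ss i)" using assms(3) i by blast
      moreover have "span_le n (ss i) s" using Full by (cases "ss i") simp_all
      moreover have "ss i \<noteq> s"
      proof
        assume "ss i = s" then have "span_le n s (ss i)" using Full by simp
        then show False using assms(5) i by blast
      qed
      ultimately show "X \<in> ?F" using i by blast
    qed
    then show ?thesis unfolding span_subcode_less_def using sum_mono xsum by blast
  next
    case (Sp a l)
    have a: "a < n" and l: "l < n" using assms(4) Sp by (simp_all add: valid_span_def)
    have xsp: "{i. i < n \<and> v i \<noteq> 0} \<subseteq> halfopen_int n a l" "{i. i < n \<and> al i \<noteq> 0} \<subseteq> closed_int n a l"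
      using xs Sp by simp_all
    show ?thesis
    proof (cases "l = 0")
      case True
      have lab: "snd x a = 0"
      proof (rule lab_sum[OF _ xsum])
        fix X y assume "X \<in> (\<lambda>i. span_subcode n E (ss i)) ` I" "y \<in> X"
        then obtain i where i: "i \<in> I" "y \<in> span_subcode n E (ss i)" by blast
        obtain w b where yw: "y = (w, b)" by (cases y)
        have nle: "\<not> span_le n (Sp a 0) (ss i)" using assms(5) i Sp True by blast
        show "snd y a = 0"
        proof (cases "ss i")
          case Empty then show ?thesis using i yw by (simp add: span_subcode_def)
        next
          case Full then show ?thesis using nle by simp
        next
          case (Sp b' m)
          have "valid_span n (ss i)" using assms(3) i(1) by blast
          then have m: "m < n" using Sp by (simp add: valid_span_def)
          have "m \<noteq> n - 1"
          proof
            assume "m = n - 1"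
            then have "span_le n (Sp a 0) (Sp b' m)" using halfopen_zero[OF a] by simp
            then show False using nle Sp by metis
          qed
          then have mlt: "m < n - 1" using m by simp
          have "\<not> closed_int n a 0 \<subseteq> closed_int n b' m"
          proof
            assume "closed_int n a 0 \<subseteq> closed_int n b' m"
            then have "span_le n (Sp a 0) (Sp b' m)" using mlt by simp
            then show False using nle Sp by metis
          qed
          then have an: "a \<notin> closed_int n b' m" using closed_zero[OF a] by simp
          have "{j. j < n \<and> b j \<noteq> 0} \<subseteq> closed_int n b' m" using i yw Sp by (simp add: span_subcode_def)
          then show ?thesis using an a yw by auto
        qed
      qed
      have "v = (\<lambda>_. 0)"
      proof
        fix i show "v i = 0"
        proof (cases "i < n")
          case True then show ?thesis using xsp(1) halfopen_zero[OF a] \<open>l = 0\<close> by auto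
        next
          case False then show ?thesis using cycle_out[OF xc] by simp
        qed
      qed
      moreover have "al = (\<lambda>_. 0)"
      proof
        fix i show "al i = 0"
        proof (cases "i < n")
          case True
          show ?thesis
          proof (rule ccontr)
            assume "al i \<noteq> 0"
            then have "i \<in> closed_int n a 0" using xsp(2) True \<open>l = 0\<close> by auto
            then have "i = a" using closed_zero[OF a] by simp
            then show False using lab xv \<open>al i \<noteq> 0\<close> by simp
          qed
        next
          case False then show ?thesis using cycle_out[OF xc] by simp
        qed
      qed
      ultimately show ?thesis unfolding span_subcode_less_def using xv subspace_sum.zero by simp
    next
      case False
      then have l1: "1 \<le> l" by simp
      have "\<exists>cs cl. inv_c n E a l x cs cl"
      proof (rule inv_sum[OF lt n _ xsum])
        fix X y assume "X \<in> (\<lambda>i. span_subcode n E (ss i)) ` I" "y \<in> X"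
        then obtain i where i: "i \<in> I" "y \<in> span_subcode n E (ss i)" by blast
        have nle: "\<not> span_le n (Sp a l) (ss i)" using assms(5) i Sp by blast
        show "\<exists>cs cl. inv_c n E a l y cs cl"
          using inv_mem[OF lt n a l l1 i(2) _ nle] assms(3) i by blast
      qed
      then obtain cs cl where inv: "inv_c n E a l x cs cl" by blast
      have va: "v a = 0"
      proof (rule ccontr)
        assume "v a \<noteq> 0" then have "a \<in> halfopen_int n a l" using xsp(1) a by blast
        then show False unfolding halfopen_int_def by simp
      qed
      have e: "\<And>t. t < l \<Longrightarrow> (cs t, cl t, cs (Suc t)) \<in> E ((a+t) mod n)" using inv unfolding inv_c_def by blast
      have z: "cs 0 = 0" "cs l = 0" "cl l = 0" using inv va xv unfolding inv_c_def by simp_all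
      have c1: "cs 1 = v ((a+1) mod n)" "cl 0 = al a" using inv xv unfolding inv_c_def by simp_all
      define off where "off i = (i+n-a) mod n" for i
      define cv where "cv i = (if i < n \<and> off i \<le> l then cs (off i) else 0)" for i
      define ca where "ca i = (if i < n \<and> off i \<le> l then cl (off i) else 0)" for i
      have cyc: "(cv, ca) \<in> cycles n E"
        using splice[OF lt n a l e z] unfolding cv_def ca_def off_def .
      define dv where "dv i = v i - cv i" for i
      define da where "da i = al i - ca i" for i
      have dcyc: "(dv, da) \<in> cycles n E"
        using cycles_diff[OF lt xc cyc] unfolding dv_def[abs_def] da_def[abs_def] .
      have offi: "(a + off i) mod n = i" if "i < n" for i using off2[OF n a that] unfolding off_def .
      have offj: "off ((a+j) mod n) = j" if "j < n" for j using off1[OF n a that] unfolding off_def .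
      have offlt: "off i < n" for i unfolding off_def using n by simp
      have offa: "off a = 0" using offj[of 0] n a by simp
      have spc: "is_span_of n (Sp a (l-1)) (cv, ca)"
      proof -
        have "i \<in> halfopen_int n a (l-1)" if "i < n" "cv i \<noteq> 0" for i
        proof -
          have t: "off i \<le> l" "cs (off i) \<noteq> 0" using that unfolding cv_def by (auto split: if_splits)
          have "off i \<noteq> 0" using t z by metis
          have "off i \<noteq> l" using t z by metis
          then have "off i \<le> l - 1" using t by simp
          then have "i \<in> closed_int n a (l-1)" using offi[OF that(1)] unfolding closed_int_def by force
          moreover have "i \<noteq> a" using \<open>off i \<noteq> 0\<close> offa by auto
          ultimately show ?thesis unfolding halfopen_int_def by blast
        qed
        moreover have "i \<in> closed_int n a (l-1)" if "i < n" "ca i \<noteq> 0" for i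
        proof -
          have t: "off i \<le> l" "cl (off i) \<noteq> 0" using that unfolding ca_def by (auto split: if_splits)
          have "off i \<noteq> l" using t z by metis
          then have "off i \<le> l - 1" using t by simp
          then show ?thesis using offi[OF that(1)] unfolding closed_int_def by force
        qed
        ultimately show ?thesis by auto
      qed
      have outv: "v i = 0" if "i < n" "l < off i" for i
      proof (rule ccontr)
        assume "v i \<noteq> 0"
        then have "i \<in> closed_int n a l" using xsp(1) that(1) unfolding halfopen_int_def by blast
        then have "off i \<le> l" using off_closed[OF n a l] unfolding off_def by blast
        then show False using that by simp
      qed
      have outa: "al i = 0" if "i < n" "l < off i" for i
      proof (rule ccontr)
        assume "al i \<noteq> 0"
        then have "i \<in> closed_int n a l" using xsp(2) that(1) by blast
        then have "off i \<le> l" using off_closed[OF n a l] unfolding off_def by blast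
        then show False using that by simp
      qed
      have n1: "1 < n" using l l1 by simp
      have spd: "is_span_of n (Sp ((a+1) mod n) (l-1)) (dv, da)"
      proof -
        have "i \<in> halfopen_int n ((a+1) mod n) (l-1)" if "i < n" "dv i \<noteq> 0" for i
        proof -
          have "\<not> l < off i"
          proof
            assume "l < off i" then have "v i = 0" "cv i = 0" using outv[OF that(1)] unfolding cv_def by auto
            then show False using that unfolding dv_def by simp
          qed
          then have tl: "off i \<le> l" by simp
          have t0: "off i \<noteq> 0"
          proof
            assume "off i = 0" then have "i = a" using offi[OF that(1)] a by simp
            then have "v i = 0" "cv i = 0" using va z a offa unfolding cv_def by auto
            then show False using that unfolding dv_def by simp
          qed
          have t1: "off i \<noteq> 1"
          proof
            assume o1: "off i = 1" then have ii: "i = (a+1) mod n" using offi[OF that(1)] by simp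
            then have "cv i = v i" using o1 l1 c1 that(1) unfolding cv_def by simp
            then show False using that unfolding dv_def by simp
          qed
          have ie: "i = ((a+1) mod n + (off i - 1)) mod n"
            using offi[OF that(1)] closed_shift[of a n "off i - 1"] t0 by simp
          have "off i - 1 \<le> l - 1" using tl by simp
          then have "i \<in> closed_int n ((a+1) mod n) (l-1)" using ie unfolding closed_int_def by blast
          moreover have "i \<noteq> (a+1) mod n"
          proof
            assume "i = (a+1) mod n" then have "off i = 1" using offj[of 1] n1 by simp
            then show False using t1 by simp
          qed
          ultimately show ?thesis unfolding halfopen_int_def by blast
        qed
        moreover have "i \<in> closed_int n ((a+1) mod n) (l-1)" if "i < n" "da i \<noteq> 0" for i
        proof -
          have "\<not> l < off i"
          proof
            assume "l < off i" then have "al i = 0" "ca i = 0" using outa[OF that(1)] unfolding ca_def by auto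
            then show False using that unfolding da_def by simp
          qed
          then have tl: "off i \<le> l" by simp
          have t0: "off i \<noteq> 0"
          proof
            assume o0: "off i = 0" then have "i = a" using offi[OF that(1)] a by simp
            then have "ca i = al i" using c1 a o0 unfolding ca_def by simp
            then show False using that unfolding da_def by simp
          qed
          have ie: "i = ((a+1) mod n + (off i - 1)) mod n"
            using offi[OF that(1)] closed_shift[of a n "off i - 1"] t0 by simp
          have "off i - 1 \<le> l - 1" using tl by simp
          then show ?thesis using ie unfolding closed_int_def by blast
        qed
        ultimately show ?thesis by auto
      qed
      have F1: "span_subcode n E (Sp a (l-1)) \<in> ?F"
      proof -
        have "valid_span n (Sp a (l-1))" using a l by (simp add: valid_span_def)
        moreover have "span_le n (Sp a (l-1)) (Sp a l)"
        proof (cases "l = n - 1")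
          case True
          have "halfopen_int n a (l-1) \<subseteq> halfopen_int n a l"
            using closed_mono_len[of "l-1" l n a] unfolding halfopen_int_def by auto
          then show ?thesis using True by simp
        next
          case False
          then show ?thesis using closed_mono_len[of "l-1" l n a] l by simp
        qed
        moreover have "Sp a (l-1) \<noteq> Sp a l" using l1 by simp
        ultimately show ?thesis using Sp by blast
      qed
      have F2: "span_subcode n E (Sp ((a+1) mod n) (l-1)) \<in> ?F"
      proof -
        have "valid_span n (Sp ((a+1) mod n) (l-1))" using n l by (simp add: valid_span_def)
        moreover have "span_le n (Sp ((a+1) mod n) (l-1)) (Sp a l)"
        proof (cases "l = n - 1")
          case True
          then show ?thesis using halfopen_shift_sub[OF n a l l1] by simp
        next
          case False
          then show ?thesis using closed_shift_sub[OF l1, of n a] l by simp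
        qed
        moreover have "Sp ((a+1) mod n) (l-1) \<noteq> Sp a l" using l1 by auto
        ultimately show ?thesis using Sp by blast
      qed
      have m1: "(cv, ca) \<in> subspace_sum scale ?F"
        by (rule subspace_sum.mem[OF F1]) (use cyc spc in \<open>unfold span_subcode_def, blast\<close>)
      have m2: "(dv, da) \<in> subspace_sum scale ?F"
        by (rule subspace_sum.mem[OF F2]) (use dcyc spd in \<open>unfold span_subcode_def, blast\<close>)
      have "(\<lambda>i. cv i + dv i, \<lambda>i. ca i + da i) \<in> subspace_sum scale ?F"
        by (rule subspace_sum.add[OF m1 m2])
      moreover have "(\<lambda>i. cv i + dv i, \<lambda>i. ca i + da i) = x"
        unfolding xv dv_def da_def by simp
      ultimately show ?thesis unfolding span_subcode_less_def by simp
    qed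
  qed
qed

end
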